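(* Let $\mathcal{X}=\mathbb{R}_{>0}^3$, $\mathcal{Y}=\mathbb{R}_{>0}$, $\mathcal{U}=\mathbb{R}_{>0}$, and consider $x^+=f(x,u)$, $y=h(x)$ with $f(x,u)=\big(x_1x_2x_3,\ x_3/x_1,\ \sqrt{x_1x_2u}\big)^T$ and $h(x)=x_1$. Then (i) for every $x\in\mathcal{X}$, $[x]_2=\{x\}$; and (ii) the system $$\hat x^+=\big(\hat x_2\hat x_3 y,\ \hat x_3/\hat x_1,\ \sqrt{\hat x_1\hat x_2 u}\big)^T$$ is a deadbeat observer for this system.
   Context: $h^{-1}(y):=\{\eta\in\mathcal{X}:h(\eta)=y\}$; $f(S,u):=\{f(s,u):s\in S\}$; $[S]_k:=\bigcup_{s\in S}[s]_k$. Define $[x]_0:=h^{-1}(h(x))$, and for $k\ge0$: $[x]_k^+:=\bigcup_{(\eta,u)\in\mathcal{X}\times\mathcal{U}:f(\eta,u)=x} f([\eta]_k,u)$, $[x]_{k+1}:=[x]_k^+\cap[x]_0$. For an input sequence $\mathbf{u}=(u_0,u_1,\ldots)$, $\phi(0,x,\mathbf{u})=x$, $\phi(k+1,x,\mathbf{u})=f(\phi(k,x,\mathbf{u}),u_k)$. For an observer $\hat x^+=g(\hat x,y,u)$, the coupled solution is $\psi(0,\hat x,x,\mathbf{u})=\hat x$, $\psi(k+1,\hat x,x,\mathbf{u})=g(\psi(k,\hat x,x,\mathbf{u}),h(\phi(k,x,\mathbf{u})),u_k)$; it is a deadbeat observer if there is $p\ge1$ with $\psi(k,\hat x,x,\mathbf{u})=\phi(k,x,\mathbf{u})$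 for all $x,\hat x\in\mathcal{X}$, all input sequences $\mathbf{u}$ with values in $\mathcal{U}$, and all $k\ge p$. *)

theory Defs
  imports Complex_Main
begin

fun cls :: "'x set \<Rightarrow> 'u set \<Rightarrow> ('x \<Rightarrow> 'u \<Rightarrow> 'x) \<Rightarrow> ('x \<Rightarrow> 'y) \<Rightarrow> nat \<Rightarrow> 'x \<Rightarrow> 'x set" where
  "cls X U f h 0 x = {\<eta> \<in> X. h \<eta> = h x}"
| "cls X U f h (Suc k) x =
     (\<Union>{(\<lambda>s. f s u) ` cls X U f h k \<eta> | \<eta> u. \<eta> \<in> X \<and> u \<in> U \<and> f \<eta> u = x})
     \<inter> cls X U f h 0 x"

fun phi :: "('x \<Rightarrow> 'u \<Rightarrow> 'x) \<Rightarrow> nat \<Rightarrow> 'x \<Rightarrow> (nat \<Rightarrow> 'u) \<Rightarrow> 'x" where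
  "phi f 0 x us = x"
| "phi f (Suc k) x us = f (phi f k x us) (us k)"

fun psi :: "('x \<Rightarrow> 'u \<Rightarrow> 'x) \<Rightarrow> ('x \<Rightarrow> 'y) \<Rightarrow> ('z \<Rightarrow> 'y \<Rightarrow> 'u \<Rightarrow> 'z)
            \<Rightarrow> nat \<Rightarrow> 'z \<Rightarrow> 'x \<Rightarrow> (nat \<Rightarrow> 'u) \<Rightarrow> 'z" where
  "psi f h g 0 xh x us = xh"
| "psi f h g (Suc k) xh x us = g (psi f h g k xh x us) (h (phi f k x us)) (us k)"

definition deadbeat :: "'x set \<Rightarrow> 'u set \<Rightarrow> ('x \<Rightarrow> 'u \<Rightarrow> 'x) \<Rightarrow> ('x \<Rightarrow> 'y)
                        \<Rightarrow> ('x \<Rightarrow> 'y \<Rightarrow> 'u \<Rightarrow> 'x) \<Rightarrow> bool" where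
  "deadbeat X U f h g \<longleftrightarrow>
     (\<exists>p\<ge>1. \<forall>x\<in>X. \<forall>xh\<in>X. \<forall>us. (\<forall>k. us k \<in> U) \<longrightarrow>
        (\<forall>k\<ge>p. psi f h g k xh x us = phi f k x us))"

definition Xex :: "(real \<times> real \<times> real) set" where
  "Xex = {(a, b, c). a > 0 \<and> b > 0 \<and> c > 0}"

definition Uex :: "real set" where
  "Uex = {u. u > 0}"

definition fex :: "real \<times> real \<times> real \<Rightarrow> real \<Rightarrow> real \<times> real \<times> real" where
  "fex x u = (case x of (x1, x2, x3) \<Rightarrow> (x1 * x2 * x3, x3 / x1, sqrt (x1 * x2 * u)))"

definition hex :: "real \<times> real \<times> real \<Rightarrow> real" where
  "hex x = fst x"

definition gex :: "real \<times> real \<times> real \<Rightarrow> real \<Rightarrow> real \<Rightarrow> real \<times> real \<times> real" where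
  "gex xh y u = (case xh of (a, b, c) \<Rightarrow> (b * c * y, c / a, sqrt (a * b * u)))"

end

theory Submission
  imports Defs
begin

definition Lg :: "real \<times> real \<times> real \<Rightarrow> real \<times> real \<times> real" where
  "Lg x = (ln (fst x), ln (fst (snd x)), ln (snd (snd x)))"

lemma fex_X: "x \<in> Xex \<Longrightarrow> u > 0 \<Longrightarrow> fex x u \<in> Xex"
  by (cases x) (auto simp: Xex_def fex_def)

lemma gex_X: "x \<in> Xex \<Longrightarrow> y > 0 \<Longrightarrow> u > 0 \<Longrightarrow> gex x y u \<in> Xex"
  by (cases x) (auto simp: Xex_def gex_def)

lemma phi_X: "x \<in> Xex \<Longrightarrow> \<forall>k. us k \<in> Uex \<Longrightarrow> phi fex k x us \<in> Xex"
  by (induction k) (auto simp: Uex_def intro!: fex_X)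

lemma psi_X: "x \<in> Xex \<Longrightarrow> xh \<in> Xex \<Longrightarrow> \<forall>k. us k \<in> Uex \<Longrightarrow> psi fex hex gex k xh x us \<in> Xex"
proof (induction k)
  case 0 then show ?case by simp
next
  case (Suc k)
  have "phi fex k x us \<in> Xex" using Suc phi_X by blast
  then have "hex (phi fex k x us) > 0" by (cases "phi fex k x us") (auto simp: Xex_def hex_def)
  then show ?case using Suc by (auto simp: Uex_def intro!: gex_X)
qed

lemma L_fex: "x \<in> Xex \<Longrightarrow> u > 0 \<Longrightarrow> Lg (fex x u) =
   (fst (Lg x) + fst (snd (Lg x)) + snd (snd (Lg x)), snd (snd (Lg x)) - fst (Lg x),
    (fst (Lg x) + fst (snd (Lg x)) + ln u) / 2)"
  by (cases x) (auto simp: Xex_def fex_def Lg_def ln_mult ln_div ln_sqrt)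

lemma L_gex: "x \<in> Xex \<Longrightarrow> y > 0 \<Longrightarrow> u > 0 \<Longrightarrow> Lg (gex x y u) =
   (fst (snd (Lg x)) + snd (snd (Lg x)) + ln y, snd (snd (Lg x)) - fst (Lg x),
    (fst (Lg x) + fst (snd (Lg x)) + ln u) / 2)"
  by (cases x) (auto simp: Xex_def gex_def Lg_def ln_mult ln_div ln_sqrt)

lemma Lg_inj: "x \<in> Xex \<Longrightarrow> y \<in> Xex \<Longrightarrow> Lg x = Lg y \<Longrightarrow> x = y"
  by (cases x; cases y) (auto simp: Xex_def Lg_def)

lemma gex_fex: "gex x (hex x) u = fex x u"
  by (cases x) (auto simp: gex_def fex_def hex_def)

lemma L_hex: "x \<in> Xex \<Longrightarrow> ln (hex x) = fst (Lg x)"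
  by (simp add: Lg_def hex_def)

lemma hex_pos: "x \<in> Xex \<Longrightarrow> hex x > 0"
  by (cases x) (auto simp: Xex_def hex_def)

lemma step3:
  assumes x: "x \<in> Xex" and xh: "xh \<in> Xex" and us: "\<forall>k. us k \<in> Uex"
  shows "psi fex hex gex 3 xh x us = phi fex 3 x us"
proof -
  have u: "\<And>k. us k > 0" using us by (auto simp: Uex_def)
  define p0 where "p0 = phi fex 0 x us"
  define p1 where "p1 = phi fex 1 x us"
  define p2 where "p2 = phi fex 2 x us"
  define p3 where "p3 = phi fex 3 x us"
  define q0 where "q0 = psi fex hex gex 0 xh x us"
  define q1 where "q1 = psi fex hex gex 1 xh x us"
  define q2 where "q2 = psi fex hex gex 2 xh x us"
  define q3 where "q3 = psi fex hex gex 3 xh x us"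
  have PX: "\<And>k. phi fex k x us \<in> Xex" using phi_X x us by blast
  have QX: "\<And>k. psi fex hex gex k xh x us \<in> Xex" using psi_X x xh us by blast
  have e1: "p1 = fex p0 (us 0)" "p2 = fex p1 (us 1)" "p3 = fex p2 (us 2)"
    unfolding p0_def p1_def p2_def p3_def by (simp_all add: numeral_3_eq_3 numeral_2_eq_2)
  have e2: "q1 = gex q0 (hex p0) (us 0)" "q2 = gex q1 (hex p1) (us 1)" "q3 = gex q2 (hex p2) (us 2)"
    unfolding p0_def p1_def p2_def q0_def q1_def q2_def q3_def
    by (simp_all add: numeral_3_eq_3 numeral_2_eq_2)
  have X: "p0 \<in> Xex" "p1 \<in> Xex" "p2 \<in> Xex" "p3 \<in> Xex" "q0 \<in> Xex" "q1 \<in> Xex" "q2 \<in> Xex" "q3 \<in> Xex"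
    unfolding p0_def p1_def p2_def p3_def q0_def q1_def q2_def q3_def by (rule PX QX)+
  have "Lg q3 = Lg p3"
    unfolding e1 e2 using X u
    by (simp add: L_fex L_gex L_hex hex_pos fex_X gex_X field_simps)
  then show ?thesis using Lg_inj X unfolding p3_def q3_def by blast
qed

lemma deadbeat_ex: "deadbeat Xex Uex fex hex gex"
  unfolding deadbeat_def
proof (intro exI[of _ 3] conjI ballI allI impI)
  fix x xh k and us :: "nat \<Rightarrow> real"
  assume x: "x \<in> Xex" and xh: "xh \<in> Xex" and us: "\<forall>k. us k \<in> Uex" and k: "3 \<le> (k::nat)"
  from k show "psi fex hex gex k xh x us = phi fex k x us"
  proof (induction k rule: dec_induct)
    case base then show ?case using step3 x xh us by blast
  next
    case (step n) then show ?case by (simp add: gex_fex)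
  qed
qed simp

lemma mem_cls: "x \<in> Xex \<Longrightarrow> x \<in> cls Xex Uex fex hex k x"
proof (induction k arbitrary: x)
  case 0 then show ?case by simp
next
  case (Suc k)
  obtain a b c where xe: "x = (a, b, c)" by (cases x)
  with Suc.prems have pos: "a > 0" "b > 0" "c > 0" by (auto simp: Xex_def)
  define \<eta> where "\<eta> = (1::real, a / b, b)"
  define u where "u = c^2 * b / a"
  have eX: "\<eta> \<in> Xex" using pos by (simp add: \<eta>_def Xex_def)
  have uU: "u \<in> Uex" using pos by (simp add: u_def Uex_def)
  have "1 * (a / b) * (c^2 * b / a) = c^2" using pos by (simp add: field_simps power2_eq_square)
  then have fe: "fex \<eta> u = x" using pos by (simp add: \<eta>_def u_def fex_def xe)
  have "x \<in> (\<lambda>s. fex s u) ` cls Xex Uex fex hex k \<eta>"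
    using Suc.IH[OF eX] fe by (metis image_eqI)
  then have "x \<in> \<Union>{(\<lambda>s. fex s u') ` cls Xex Uex fex hex k \<eta>' | \<eta>' u'. \<eta>' \<in> Xex \<and> u' \<in> Uex \<and> fex \<eta>' u' = x}"
    using eX uU fe by blast
  moreover have "x \<in> cls Xex Uex fex hex 0 x" using Suc.prems by simp
  ultimately show ?case by (simp only: cls.simps) (rule IntI)
qed

lemma cls2_sub:
  assumes x: "x \<in> Xex" and zin: "z \<in> cls Xex Uex fex hex 2 x"
  shows "z = x"
proof -
  have A: "z \<in> \<Union>{(\<lambda>s. fex s u) ` cls Xex Uex fex hex (Suc 0) \<eta> | \<eta> u. \<eta> \<in> Xex \<and> u \<in> Uex \<and> fex \<eta> u = x}
     \<inter> cls Xex Uex fex hex 0 x"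
    using zin by (simp only: numeral_2_eq_2 cls.simps(2)[of _ _ _ _ "Suc 0"])
  then obtain \<eta> u s where eX: "\<eta> \<in> Xex" and uU: "u \<in> Uex" and fx: "fex \<eta> u = x"
     and s1: "s \<in> cls Xex Uex fex hex (Suc 0) \<eta>" and zs: "z = fex s u"
    by blast
  have zh: "hex z = hex x" using A by simp
  have B: "s \<in> \<Union>{(\<lambda>s. fex s u) ` cls Xex Uex fex hex 0 \<eta>' | \<eta>' u. \<eta>' \<in> Xex \<and> u \<in> Uex \<and> fex \<eta>' u = \<eta>}
     \<inter> cls Xex Uex fex hex 0 \<eta>"
    using s1 by (simp only: cls.simps(2)[of _ _ _ _ 0])
  then obtain \<zeta> v r where zX: "\<zeta> \<in> Xex" and vU: "v \<in> Uex" and fz: "fex \<zeta> v = \<eta>"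
     and r0: "r \<in> cls Xex Uex fex hex 0 \<zeta>" and sr: "s = fex r v"
    by blast
  have sh: "hex s = hex \<eta>" using B by simp
  have rX: "r \<in> Xex" and rh: "hex r = hex \<zeta>" using r0 by auto
  obtain r1 r2 r3 where re: "r = (r1, r2, r3)" by (cases r)
  obtain z1 z2 z3 where ze: "\<zeta> = (z1, z2, z3)" by (cases \<zeta>)
  have pos: "r1 > 0" "r2 > 0" "r3 > 0" "z1 > 0" "z2 > 0" "z3 > 0" "v > 0" "u > 0"
    using rX zX vU uU by (auto simp: Xex_def Uex_def re ze)
  have h1: "r1 = z1" using rh by (simp add: re ze hex_def)
  have h2: "r1 * r2 * r3 = z1 * z2 * z3" using sh by (simp add: sr fz[symmetric] re ze hex_def fex_def)
  have h3: "(r1 * r2 * r3) * (r3 / r1) * sqrt (r1 * r2 * v) = (z1 * z2 * z3) * (z3 / z1) * sqrt (z1 * z2 * v)"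
    using zh by (simp add: zs sr fx[symmetric] fz[symmetric] re ze hex_def fex_def)
  have a1: "r2 * r3 = z2 * z3" using h1 h2 pos by simp
  have a2': "(r2 * r3) * (r3 * sqrt (r1 * r2 * v)) = (z2 * z3) * (z3 * sqrt (z1 * z2 * v))"
    using h3 h1 pos by (simp add: field_simps)
  have "z2 * z3 \<noteq> 0" using pos by simp
  then have a2: "r3 * sqrt (r1 * r2 * v) = z3 * sqrt (z1 * z2 * v)"
    using a2' a1 by simp
  then have "(r3 * sqrt (r1 * r2 * v))^2 = (z3 * sqrt (z1 * z2 * v))^2" by simp
  then have "r3^2 * (r1 * r2 * v) = z3^2 * (z1 * z2 * v)" using pos by (simp add: power_mult_distrib)
  then have a3: "r3 * (r2 * r3) = z3 * (z2 * z3)" using h1 pos by (simp add: power2_eq_square algebra_simps)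
  have "r3 = z3" using a3 a1 pos by (metis mult_cancel_right less_irrefl mult_pos_pos)
  moreover then have "r2 = z2" using a1 pos by simp
  ultimately have "r = \<zeta>" using h1 re ze by simp
  then show ?thesis using zs sr fz fx by simp
qed

theorem mainTheorem9:
  shows "(\<forall>x\<in>Xex. cls Xex Uex fex hex 2 x = {x}) \<and> deadbeat Xex Uex fex hex gex"
  using mem_cls cls2_sub deadbeat_ex by blast

end
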